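(* Let $\mathcal{C}\subset\mathbb{P}^2(\mathbb{C})$ be a curve of degree $n$. (i) If $\mathcal C$ has exactly one singular point, and this point is an ordinary singular point of multiplicity $\mu$ with $\mu=n-1$ or $\mu=n-2$, then $\mathcal C$ is irreducible. (ii) If $\mathcal C$ has exactly two singular points, and they are ordinary singular points of multiplicities $n-1$ and $2$ respectively, then $\mathcal C$ has a linear component.
   Context: An ordinary singular point of multiplicity $\mu$ is a point of multiplicity $\mu$ at which the curve has $\mu$ distinct tangent lines. *)

theory Defs
  imports "HOL-Analysis.Analysis" "HOL-Computational_Algebra.Polynomial"
begin

text \<open>Points of the projective plane are nonzero vectors
  in complex^3, up to nonzero scalar multiples.\<close>

definition eval3 :: "'a::comm_ring_1 poly poly poly \<Rightarrow> 'a \<Rightarrow> 'a \<Rightarrow> 'a \<Rightarrow> 'a" where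
  "eval3 F x y z = poly (poly (poly F [:[:z:]:]) [:y:]) x"

definition homogeneous3 :: "complex poly poly poly \<Rightarrow> nat \<Rightarrow> bool" where
  "homogeneous3 F d \<longleftrightarrow>
     (\<forall>i j k. coeff (coeff (coeff F i) j) k \<noteq> 0 \<longrightarrow> i + j + k = d)"

text \<open>The univariate polynomial t \<mapsto> F(p + t v).\<close>
definition restr_line :: "complex poly poly poly \<Rightarrow> complex^3 \<Rightarrow> complex^3 \<Rightarrow> complex poly" where
  "restr_line F p v =
     eval3 (map_poly (map_poly (map_poly (\<lambda>c. [:c:]))) F)
       [:p$1, v$1:] [:p$2, v$2:] [:p$3, v$3:]"

definition proj_eq :: "complex^3 \<Rightarrow> complex^3 \<Rightarrow> bool" where
  "proj_eq p q \<longleftrightarrow> (\<exists>c. c \<noteq> 0 \<and> q = c *s p)"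

text \<open>Multiplicity of the curve F = 0 at p: order of vanishing of F(p + t v) at t = 0
  for generic direction v.\<close>
definition point_multiplicity :: "complex poly poly poly \<Rightarrow> complex^3 \<Rightarrow> nat" where
  "point_multiplicity F p = (LEAST m. \<exists>v. coeff (restr_line F p v) m \<noteq> 0)"

definition singular_point :: "complex poly poly poly \<Rightarrow> complex^3 \<Rightarrow> bool" where
  "singular_point F p \<longleftrightarrow> p \<noteq> 0 \<and>
     (\<forall>v. coeff (restr_line F p v) 0 = 0 \<and> coeff (restr_line F p v) 1 = 0)"

text \<open>Tangent lines at p: lines through p (as 2-dimensional subspaces of C^3) on which
  the leading form of the expansion of F at p (the tangent cone) vanishes.\<close>
definition tangent_lines :: "complex poly poly poly \<Rightarrow> complex^3 \<Rightarrow> (complex^3) set set" where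
  "tangent_lines F p =
     { {w. \<exists>a b. w = a *s p + b *s v} | v.
         (\<forall>c. v \<noteq> c *s p) \<and> coeff (restr_line F p v) (point_multiplicity F p) = 0 }"

definition ordinary_singular_point :: "complex poly poly poly \<Rightarrow> complex^3 \<Rightarrow> nat \<Rightarrow> bool" where
  "ordinary_singular_point F p \<mu> \<longleftrightarrow>
     singular_point F p \<and> point_multiplicity F p = \<mu> \<and>
     finite (tangent_lines F p) \<and> card (tangent_lines F p) = \<mu>"

definition has_linear_component :: "complex poly poly poly \<Rightarrow> bool" where
  "has_linear_component F \<longleftrightarrow> (\<exists>L. L \<noteq> 0 \<and> homogeneous3 L 1 \<and> L dvd F)"

end

theory Submission
  imports Defs "HOL-Computational_Algebra.Fundamental_Theorem_Algebra"
begin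


definition rhom :: "('a::comm_ring_1 \<Rightarrow> 'b::comm_ring_1) \<Rightarrow> bool" where
  "rhom h \<longleftrightarrow> h 0 = 0 \<and> h 1 = 1 \<and> (\<forall>a b. h (a + b) = h a + h b) \<and> (\<forall>a b. h (a * b) = h a * h b)"

lemma rhomD: assumes "rhom h" shows "h 0 = 0" "h 1 = 1" "h (a + b) = h a + h b" "h (a * b) = h a * h b"
  using assms by (auto simp: rhom_def)

lemma rhom_minus: assumes "rhom h" shows "h (- a) = - h a" "h (a - b) = h a - h b"
proof -
  have 1: "h (- c) = - h c" for c
  proof -
    have "h (c + - c) = 0" using rhomD[OF assms] by simp
    then show ?thesis using rhomD(3)[OF assms, of c "-c"] by (simp add: eq_neg_iff_add_eq_0 add.commute)
  qed
  show "h (- a) = - h a" by (rule 1)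
  show "h (a - b) = h a - h b" using rhomD(3)[OF assms, of a "-b"] 1[of b] by simp
qed

lemma rhom_power: assumes "rhom h" shows "h (a ^ n) = h a ^ n"
  by (induction n) (auto simp: rhomD[OF assms])

lemma map_poly_add_hom: assumes "rhom h" shows "map_poly h (p + q) = map_poly h p + map_poly h q"
  by (intro poly_eqI) (simp add: coeff_map_poly rhomD[OF assms])

lemma map_poly_mult_hom: assumes "rhom h" shows "map_poly h (p * q) = map_poly h p * map_poly h q"
proof (induction p)
  case 0 then show ?case by simp
next
  case (pCons a p)
  have "map_poly h (pCons a p * q) = map_poly h (smult a q + pCons 0 (p * q))" by simp
  also have "\<dots> = smult (h a) (map_poly h q) + pCons 0 (map_poly h p * map_poly h q)"
    by (simp add: map_poly_add_hom[OF assms] map_poly_smult rhomD[OF assms] map_poly_pCons pCons.IH)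
  also have "\<dots> = map_poly h (pCons a p) * map_poly h q"
    by (simp add: map_poly_pCons rhomD[OF assms])
  finally show ?case .
qed

lemma rhom_map_poly: assumes "rhom h" shows "rhom (map_poly h)"
  unfolding rhom_def using map_poly_add_hom[OF assms] map_poly_mult_hom[OF assms] rhomD[OF assms]
  by (auto simp: one_pCons map_poly_pCons)

lemma rhom_poly_hom: assumes "rhom h" shows "h (poly p x) = poly (map_poly h p) (h x)"
  by (induction p) (auto simp: rhomD[OF assms] map_poly_pCons)

lemma rhom_comp: "rhom f \<Longrightarrow> rhom g \<Longrightarrow> rhom (f \<circ> g)"
  by (auto simp: rhom_def)

lemma rhom_const: "rhom (\<lambda>c. [:c:])"
  by (auto simp: rhom_def)

lemma rhom_poly: "rhom (\<lambda>p. poly p x)"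
  by (auto simp: rhom_def)

lemma rhom_eval3: "rhom (\<lambda>P. eval3 P x y z)"
  by (auto simp: rhom_def eval3_def)

lemma rhom_eval3_hom: assumes "rhom h"
  shows "h (eval3 F x y z) = eval3 (map_poly (map_poly (map_poly h)) F) (h x) (h y) (h z)"
proof -
  have h1: "rhom (map_poly h)" "rhom (map_poly (map_poly h))" using rhom_map_poly[OF assms] rhom_map_poly[OF rhom_map_poly[OF assms]] by blast+
  show ?thesis unfolding eval3_def
    by (simp add: rhom_poly_hom[OF assms] rhom_poly_hom[OF h1(1)] rhom_poly_hom[OF h1(2)] map_poly_pCons rhomD[OF assms] rhomD[OF h1(1)])
qed

lemma map_poly_id_fun[simp]: "map_poly (\<lambda>x. x) = (\<lambda>x. x)"
  by (rule ext) simp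

lemma restr_line_eval:
  "poly (restr_line F p v) t = eval3 F (p$1 + t * v$1) (p$2 + t * v$2) (p$3 + t * v$3)"
proof -
  have "poly (restr_line F p v) t = eval3 (map_poly (map_poly (map_poly ((\<lambda>q. poly q t) \<circ> (\<lambda>c. [:c:])))) F)
     (p$1 + t * v$1) (p$2 + t * v$2) (p$3 + t * v$3)"
    unfolding restr_line_def
    by (subst rhom_eval3_hom[OF rhom_poly]) (simp add: map_poly_map_poly o_def algebra_simps)
  then show ?thesis by (simp add: o_def)
qed



definition ev :: "complex poly poly poly \<Rightarrow> complex^3 \<Rightarrow> complex" where
  "ev F w = eval3 F (w$1) (w$2) (w$3)"

definition ev2 :: "complex poly poly \<Rightarrow> complex \<Rightarrow> complex \<Rightarrow> complex" where
  "ev2 C x y = poly (poly C [:y:]) x"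

lemma rhom_ev: "rhom (\<lambda>P. ev P w)" unfolding ev_def by (rule rhom_eval3)
lemma rhom_ev2: "rhom (\<lambda>P. ev2 P x y)" unfolding ev2_def by (auto simp: rhom_def)

lemma ev_simps[simp]: "ev (P + Q) w = ev P w + ev Q w" "ev (P * Q) w = ev P w * ev Q w"
  "ev (P - Q) w = ev P w - ev Q w" "ev 0 w = 0" "ev 1 w = 1" "ev (- P) w = - ev P w"
  "ev [:[:[:c:]:]:] w = c"
  by (auto simp: ev_def eval3_def)

lemma ev2_simps[simp]: "ev2 (P + Q) x y = ev2 P x y + ev2 Q x y" "ev2 (P * Q) x y = ev2 P x y * ev2 Q x y"
  "ev2 (P - Q) x y = ev2 P x y - ev2 Q x y" "ev2 0 x y = 0" "ev2 1 x y = 1" "ev2 (- P) x y = - ev2 P x y"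
  "ev2 [:[:c:]:] x y = c"
  by (auto simp: ev2_def)

lemma eval3_const[simp]: "eval3 [:[:[:c:]:]:] x y z = c" by (simp add: eval3_def)

lemma map_poly_single: "f 0 = 0 \<Longrightarrow> map_poly f [:x:] = [:f x:]" by (simp add: map_poly_pCons)

lemma ev_smult[simp]: "ev (smult [:[:a:]:] F) w = a * ev F w" by (simp add: ev_def eval3_def)

lemma id1: fixes p :: "complex poly" assumes "\<And>x. poly p x = 0" shows "p = 0"
proof -
  have "poly p = poly 0" using assms by auto
  then show ?thesis by (simp add: poly_eq_poly_eq_iff)
qed

lemma id_const: fixes P :: "'a::idom poly" and f :: "complex \<Rightarrow> 'a"
  assumes "\<And>z. poly P (f z) = 0" "inj f" shows "P = 0"
proof (rule ccontr)
  assume "P \<noteq> 0"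
  then have "finite {x. poly P x = 0}" by (rule poly_roots_finite)
  moreover have "range f \<subseteq> {x. poly P x = 0}" using assms by auto
  ultimately have "finite (range f)" by (rule finite_subset[rotated])
  then have "finite (UNIV::complex set)" using assms(2) finite_imageD by blast
  then show False using infinite_UNIV_char_0 by blast
qed

lemma id2: assumes "\<And>x y. ev2 B x y = 0" shows "B = 0"
proof -
  have "poly B [:y:] = 0" for y using assms by (intro id1) (simp add: ev2_def)
  then show ?thesis by (intro id_const[where f="\<lambda>y. [:y:]"]) (auto simp: inj_def)
qed

lemma id3: assumes "\<And>w. ev P w = 0" shows "P = 0"
proof -
  have "poly P [:[:z:]:] = 0" for z
    by (intro id2) (use assms[of "vector [_, _, z]"] in \<open>simp add: ev2_def ev_def eval3_def\<close>)
  then show ?thesis by (intro id_const[where f="\<lambda>z. [:[:z:]:]"]) (auto simp: inj_def)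
qed

lemma id3_eq: assumes "\<And>w. ev P w = ev Q w" shows "P = Q"
  using id3[of "P - Q"] assms by simp

lemma id2_eq: assumes "\<And>x y. ev2 P x y = ev2 Q x y" shows "P = Q"
  using id2[of "P - Q"] assms by simp

lemma id1_eq: fixes p q :: "complex poly" assumes "\<And>x. poly p x = poly q x" shows "p = q"
  using id1[of "p - q"] assms by simp

lemma eval3_ev2: "eval3 F x y z = poly (map_poly (\<lambda>C. ev2 C x y) F) z"
proof -
  have "eval3 F x y z = ev2 (poly F [:[:z:]:]) x y" by (simp add: eval3_def ev2_def)
  also have "\<dots> = poly (map_poly (\<lambda>C. ev2 C x y) F) (ev2 [:[:z:]:] x y)"
    by (rule rhom_poly_hom[OF rhom_ev2])
  finally show ?thesis by simp
qed

lemma ev_z: "ev F w = poly (map_poly (\<lambda>C. ev2 C (w$1) (w$2)) F) (w$3)"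
  unfolding ev_def by (rule eval3_ev2)

definition lin3 :: "complex^3^3 \<Rightarrow> 3 \<Rightarrow> complex poly poly poly" where
  "lin3 A i = [:[:[:0, A$i$1:], [:A$i$2:]:], [:[:A$i$3:]:]:]"

definition compF :: "complex poly poly poly \<Rightarrow> complex^3^3 \<Rightarrow> complex poly poly poly" where
  "compF F A = eval3 (map_poly (map_poly (map_poly (\<lambda>c. [:[:[:c:]:]:]))) F) (lin3 A 1) (lin3 A 2) (lin3 A 3)"

lemma ev_lin3: "ev (lin3 A i) w = (A *v w)$i"
  by (simp add: ev_def eval3_def lin3_def matrix_vector_mult_def sum_3 algebra_simps)

lemma ev_compF: "ev (compF F A) w = ev F (A *v w)"
proof -
  have "ev (compF F A) w = eval3 (map_poly (map_poly (map_poly ((\<lambda>P. ev P w) \<circ> (\<lambda>c. [:[:[:c:]:]:])))) F)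
       (ev (lin3 A 1) w) (ev (lin3 A 2) w) (ev (lin3 A 3) w)"
    unfolding compF_def
    by (subst rhom_eval3_hom[OF rhom_ev]) (simp add: map_poly_map_poly o_def)
  then show ?thesis by (simp add: o_def ev_lin3 ev_def[of F])
qed

lemma compF_mult: "compF (G * H) A = compF G A * compF H A"
  by (rule id3_eq) (simp add: ev_compF)

definition scp :: "'a::comm_ring_1 \<Rightarrow> 'a poly \<Rightarrow> 'a poly" where
  "scp c p = pcompose p [:0, c:]"

lemma coeff_scp: "coeff (scp c p) i = c ^ i * coeff p i"
proof (induction p arbitrary: i)
  case 0 then show ?case by (simp add: scp_def)
next
  case (pCons a p)
  show ?case
  proof (cases i)
    case 0 then show ?thesis by (simp add: scp_def pcompose_pCons)
  next
    case (Suc j)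
    have "coeff (scp c (pCons a p)) i = coeff ([:a:] + pCons 0 (smult c (scp c p))) i"
      by (simp add: scp_def pcompose_pCons)
    also have "\<dots> = c * coeff (scp c p) j" using Suc by simp
    finally show ?thesis using pCons.IH Suc by simp
  qed
qed

lemma poly_scp: "poly (scp c p) x = poly p (c * x)"
  by (simp add: scp_def poly_pcompose mult.commute)

lemma rhom_scp: "rhom (scp c)"
  by (auto simp: rhom_def scp_def pcompose_add pcompose_mult pcompose_1)

lemma scp_const[simp]: "scp c [:a:] = [:a:]" by (simp add: scp_def)
lemma scp_0[simp]: "scp c 0 = 0" by (simp add: scp_def)

definition S3 :: "complex \<Rightarrow> complex poly poly poly \<Rightarrow> complex poly poly poly" where
  "S3 c F = scp [:[:c:]:] (map_poly (\<lambda>C. scp [:c:] (map_poly (scp c) C)) F)"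

lemma coeff_S3: "coeff (coeff (coeff (S3 c F) i) j) k = c^(i+j+k) * coeff (coeff (coeff F i) j) k"
  by (simp add: S3_def coeff_scp poly_const_pow coeff_map_poly scp_def[symmetric] power_add mult_ac)

lemma ev_S3: "ev (S3 c F) w = ev F (c *s w)"
proof -
  define \<phi> where "\<phi> = (\<lambda>C. scp [:c:] (map_poly (scp c) C))"
  have r: "rhom \<phi>" unfolding \<phi>_def
    by (rule rhom_comp[unfolded o_def, OF rhom_scp rhom_map_poly[OF rhom_scp]])
  have \<phi>c: "\<phi> [:[:a:]:] = [:[:a:]:]" for a by (simp add: \<phi>_def map_poly_single)
  have "poly (map_poly \<phi> F) [:[:c * w$3:]:] = \<phi> (poly F [:[:c * w$3:]:])"
    using rhom_poly_hom[OF r, of F "[:[:c * w$3:]:]"] \<phi>c by simp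
  moreover have "poly (\<phi> X) [:w$2:] = scp c (poly X [:c * w$2:])" for X
  proof -
    have "poly (\<phi> X) [:w$2:] = poly (map_poly (scp c) X) [:c * w$2:]"
      by (simp add: \<phi>_def poly_scp mult.commute)
    also have "\<dots> = scp c (poly X [:c * w$2:])"
      using rhom_poly_hom[OF rhom_scp[of c], of X "[:c * w$2:]"] by simp
    finally show ?thesis .
  qed
  ultimately show ?thesis
    by (simp add: ev_def eval3_def S3_def \<phi>_def[symmetric] poly_scp)
qed

lemma homog_sem: assumes "homogeneous3 F n" shows "ev F (c *s w) = c ^ n * ev F w"
proof -
  have "S3 c F = smult [:[:c^n:]:] F"
    by (intro poly_eqI) (use assms in \<open>auto simp: coeff_S3 homogeneous3_def poly_const_pow\<close>)
  then have "ev (S3 c F) w = c^n * ev F w" by simp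
  then show ?thesis by (simp add: ev_S3)
qed

lemma homog_sem_conv: assumes "\<And>c w. ev F (c *s w) = c ^ n * ev F w" shows "homogeneous3 F n"
proof -
  have "S3 2 F = smult [:[:2^n:]:] F"
    by (rule id3_eq) (simp add: ev_S3 assms)
  then have e: "coeff (coeff (coeff (S3 2 F) i) j) k = coeff (coeff (coeff (smult [:[:2^n:]:] F) i) j) k"
    for i j k by simp
  show ?thesis unfolding homogeneous3_def
  proof (intro allI impI)
    fix i j k assume ne: "coeff (coeff (coeff F i) j) k \<noteq> 0"
    from e[of i j k] ne have "(2::complex)^(i+j+k) = 2^n" by (simp add: coeff_S3 poly_const_pow)
    then have "(of_nat (2^(i+j+k)) :: complex) = of_nat (2^n)" by simp
    then have "(2::nat)^(i+j+k) = 2^n" using of_nat_eq_iff by blast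
    then show "i + j + k = n" by simp
  qed
qed



section \<open>Linear algebra\<close>

definition mk3 :: "complex^3 \<Rightarrow> complex^3 \<Rightarrow> complex^3 \<Rightarrow> complex^3^3" where
  "mk3 a b c = (\<chi> i j. if j = 1 then a$i else if j = 2 then b$i else c$i)"

lemma mk3_mult: "mk3 a b c *v w = w$1 *s a + w$2 *s b + w$3 *s c"
  by (simp add: vec_eq_iff matrix_vector_mult_def sum_3 mk3_def algebra_simps)

lemma mv_lin2: "A *v (x + t *s y) = A *v x + t *s (A *v (y :: complex^3))"
  by (simp add: vec_eq_iff matrix_vector_mult_def sum.distrib sum_distrib_left algebra_simps)

lemma mv_smult: "A *v (t *s y) = t *s (A *v (y :: complex^3))"
  by (simp add: vec_eq_iff matrix_vector_mult_def sum_distrib_left algebra_simps)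

lemma det_mk3: "det (mk3 a b c) = (a$2*b$3 - a$3*b$2)*c$1 + (a$3*b$1 - a$1*b$3)*c$2 + (a$1*b$2 - a$2*b$1)*c$3"
  by (simp add: det_3 mk3_def algebra_simps)

lemma indep_cross:
  fixes a b :: "complex^3"
  assumes "a \<noteq> 0" "\<not> (\<exists>k. b = k *s a)"
  shows "a$2*b$3 - a$3*b$2 \<noteq> 0 \<or> a$3*b$1 - a$1*b$3 \<noteq> 0 \<or> a$1*b$2 - a$2*b$1 \<noteq> 0"
proof (rule ccontr)
  assume "\<not> ?thesis"
  then have c: "a$2*b$3 = a$3*b$2" "a$3*b$1 = a$1*b$3" "a$1*b$2 = a$2*b$1" by auto
  from assms(1) have "a$1 \<noteq> 0 \<or> a$2 \<noteq> 0 \<or> a$3 \<noteq> 0" by (auto simp: vec_eq_iff forall_3)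
  then show False
  proof (elim disjE)
    assume h: "a$1 \<noteq> 0"
    have "b = (b$1 / a$1) *s a" using c h
      by (auto simp: vec_eq_iff forall_3 field_simps)
    then show False using assms(2) by blast
  next
    assume h: "a$2 \<noteq> 0"
    have "b = (b$2 / a$2) *s a" using c h
      by (auto simp: vec_eq_iff forall_3 field_simps)
    then show False using assms(2) by blast
  next
    assume h: "a$3 \<noteq> 0"
    have "b = (b$3 / a$3) *s a" using c h
      by (auto simp: vec_eq_iff forall_3 field_simps)
    then show False using assms(2) by blast
  qed
qed

lemma basis12:
  fixes a b :: "complex^3"
  assumes "a \<noteq> 0" "\<not> (\<exists>k. b = k *s a)"
  shows "\<exists>c. det (mk3 a b c) \<noteq> 0"
proof -
  from indep_cross[OF assms] show ?thesis
  proof (elim disjE)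
    assume "a$2*b$3 - a$3*b$2 \<noteq> 0"
    then show ?thesis by (intro exI[of _ "vector [1,0,0]"]) (simp add: det_mk3)
  next
    assume "a$3*b$1 - a$1*b$3 \<noteq> 0"
    then show ?thesis by (intro exI[of _ "vector [0,1,0]"]) (simp add: det_mk3)
  next
    assume "a$1*b$2 - a$2*b$1 \<noteq> 0"
    then show ?thesis by (intro exI[of _ "vector [0,0,1]"]) (simp add: det_mk3)
  qed
qed

lemma basis13:
  fixes a b :: "complex^3"
  assumes "a \<noteq> 0" "\<not> (\<exists>k. b = k *s a)"
  shows "\<exists>c. det (mk3 a c b) \<noteq> 0"
proof -
  from indep_cross[OF assms] show ?thesis
  proof (elim disjE)
    assume "a$2*b$3 - a$3*b$2 \<noteq> 0"
    then show ?thesis by (intro exI[of _ "vector [1,0,0]"]) (simp add: det_mk3 algebra_simps)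
  next
    assume "a$3*b$1 - a$1*b$3 \<noteq> 0"
    then show ?thesis by (intro exI[of _ "vector [0,1,0]"]) (simp add: det_mk3 algebra_simps)
  next
    assume "a$1*b$2 - a$2*b$1 \<noteq> 0"
    then show ?thesis by (intro exI[of _ "vector [0,0,1]"]) (simp add: det_mk3 algebra_simps)
  qed
qed

lemma inverse_ex:
  fixes A :: "complex^3^3"
  assumes "det A \<noteq> 0"
  shows "\<exists>B. \<forall>w. A *v (B *v w) = w \<and> B *v (A *v w) = w"
proof -
  have "invertible A" using assms invertible_det_nz by blast
  then obtain B where "A ** B = mat 1" "B ** A = mat 1" unfolding invertible_def by blast
  then show ?thesis by (intro exI[of _ B]) (simp add: matrix_vector_mul_assoc)
qed

section \<open>Restriction to lines\<close>

lemma restr_ev: "poly (restr_line F p v) t = ev F (p + t *s v)"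
  by (simp add: restr_line_eval ev_def)

lemma restr_compF: "restr_line (compF F A) w v = restr_line F (A *v w) (A *v v)"
  by (rule id1_eq) (simp add: restr_ev ev_compF mv_lin2)

lemma restr_mult: "restr_line (G * H) p v = restr_line G p v * restr_line H p v"
  by (rule id1_eq) (simp add: restr_ev)

lemma ev_const_C: "ev [:C:] w = ev2 C (w$1) (w$2)"
  by (simp add: ev_def eval3_def ev2_def)

lemma ev2_homog:
  assumes "\<And>j k. coeff (coeff C j) k \<noteq> 0 \<Longrightarrow> j + k = m"
  shows "ev2 C (t*x) (t*y) = t^m * ev2 C x y"
proof -
  have "homogeneous3 [:C:] m" unfolding homogeneous3_def
    using assms by (auto simp: coeff_pCons split: nat.splits)
  from homog_sem[OF this, of t "vector [x, y, 0]"] show ?thesis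
    by (simp add: ev_const_C)
qed

lemma poly_sum_le: fixes p :: "'a::comm_semiring_1 poly" assumes "degree p \<le> N" shows "poly p x = (\<Sum>i\<le>N. coeff p i * x ^ i)"
proof -
  have "poly p x = (\<Sum>i\<le>degree p. coeff p i * x ^ i)" by (rule poly_altdef)
  also have "\<dots> = (\<Sum>i\<le>N. coeff p i * x ^ i)"
    by (rule sum.mono_neutral_left) (use assms in \<open>auto simp: coeff_eq_0\<close>)
  finally show ?thesis .
qed

lemma ev2_as_poly: "ev2 g x0 y0 = poly (map_poly (\<lambda>c. poly c x0) g) y0"
  unfolding ev2_def using rhom_poly_hom[OF rhom_poly[of x0], of g "[:y0:]"] by simp

lemma zero_lemma:
  fixes g :: "complex poly poly"
  assumes "\<And>c. g \<noteq> [:[:c:]:]"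
  shows "\<exists>x y. (x \<noteq> 0 \<or> y \<noteq> 0) \<and> ev2 g x y = 0"
proof (cases "degree g = 0")
  case True
  then obtain g0 where g: "g = [:g0:]" by (metis degree_eq_zeroE)
  have "degree g0 \<noteq> 0"
  proof
    assume "degree g0 = 0"
    then obtain c where "g0 = [:c:]" by (metis degree_eq_zeroE)
    then show False using assms g by blast
  qed
  then have "\<not> constant (poly g0)" by (simp add: constant_degree)
  then obtain x where "poly g0 x = 0" using fundamental_theorem_of_algebra by blast
  then show ?thesis by (intro exI[of _ x] exI[of _ 1]) (simp add: g ev2_def)
next
  case False
  then have lc: "lead_coeff g \<noteq> 0" by auto
  have "finite ({x. poly (lead_coeff g) x = 0} \<union> {0})" using poly_roots_finite[OF lc] by simp
  then obtain x0 where x0: "x0 \<notin> {x. poly (lead_coeff g) x = 0} \<union> {0}"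
    using ex_new_if_finite[OF infinite_UNIV_char_0] by blast
  define h where "h = map_poly (\<lambda>c. poly c x0) g"
  have "coeff h (degree g) = poly (lead_coeff g) x0" by (simp add: h_def coeff_map_poly)
  with x0 have "coeff h (degree g) \<noteq> 0" by simp
  then have "degree h \<ge> degree g" by (rule le_degree)
  with False have "degree h \<noteq> 0" by simp
  then have "\<not> constant (poly h)" by (simp add: constant_degree)
  then obtain y0 where "poly h y0 = 0" using fundamental_theorem_of_algebra by blast
  then show ?thesis using x0 by (intro exI[of _ x0] exI[of _ y0]) (simp add: ev2_as_poly h_def)
qed

lemma nz_lemma:
  fixes B :: "complex poly poly"
  assumes "B \<noteq> 0"
  shows "\<exists>x y. x \<noteq> 0 \<and> ev2 B x y \<noteq> 0"
proof (rule ccontr)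
  assume "\<not> ?thesis"
  then have "ev2 (B * [:[:0,1:]:]) x y = 0" for x y by (auto simp: ev2_def)
  then have "B * [:[:0,1:]:] = 0" by (rule id2)
  then show False using assms by simp
qed

lemma roots_double:
  fixes s g h :: "complex poly"
  assumes "s = g * h" "s \<noteq> 0" "degree s \<le> m" "poly g r = 0" "poly h r = 0"
  shows "card {x. poly s x = 0} \<le> m - 1"
proof -
  obtain g1 where g1: "g = [:-r, 1:] * g1" using assms(4) poly_eq_0_iff_dvd by blast
  obtain h1 where h1: "h = [:-r, 1:] * h1" using assms(5) poly_eq_0_iff_dvd by blast
  define S where "S = [:-r, 1:] * g1 * h1"
  have s: "s = [:-r, 1:] * S" using assms(1) g1 h1 unfolding S_def by (simp only: ac_simps)
  have S0: "S \<noteq> 0" using s assms(2) by auto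
  have "{x. poly s x = 0} = {x. poly S x = 0}" by (auto simp: s S_def)
  moreover have "degree s = Suc (degree S)"
  proof -
    have "degree ([:-r, 1:] * S) = degree [:-r, 1:] + degree S" by (rule degree_mult_eq) (use S0 in auto)
    then show ?thesis unfolding s by simp
  qed
  moreover have "card {x. poly S x = 0} \<le> degree S" by (rule card_poly_roots_bound[OF S0])
  ultimately show ?thesis using assms(3) by simp
qed

section \<open>Expansion at e3\<close>

lemma homog_deg_le:
  assumes "homogeneous3 F n" "F \<noteq> 0" shows "degree F \<le> n"
proof -
  have "lead_coeff F \<noteq> 0" using assms by simp
  then obtain j where "coeff (lead_coeff F) j \<noteq> 0" by (metis poly_eqI coeff_0)
  then obtain k where "coeff (coeff (lead_coeff F) j) k \<noteq> 0" by (metis poly_eqI coeff_0)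
  then show ?thesis using assms(1) unfolding homogeneous3_def by fastforce
qed

lemma homog_coeff_ev2:
  assumes "homogeneous3 F n"
  shows "ev2 (coeff F i) (t*x) (t*y) = t^(n-i) * ev2 (coeff F i) x y"
proof (rule ev2_homog)
  fix j k assume "coeff (coeff (coeff F i) j) k \<noteq> 0"
  then have "i + j + k = n" using assms by (auto simp: homogeneous3_def)
  then show "j + k = n - i" by simp
qed

definition e3 :: "complex^3" where "e3 = vector [0,0,1]"

lemma restr_e3_expand:
  assumes "homogeneous3 F n" "F \<noteq> 0"
  shows "restr_line F e3 w = (\<Sum>i\<le>degree F. smult (ev2 (coeff F i) (w$1) (w$2)) (monom 1 (n - i) * [:1, w$3:]^i))"
proof (rule id1_eq)
  fix t
  have "poly (restr_line F e3 w) t = poly (map_poly (\<lambda>C. ev2 C (t * w$1) (t * w$2)) F) (1 + t * w$3)"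
    by (simp add: restr_ev ev_z e3_def)
  also have "\<dots> = (\<Sum>i\<le>degree F. ev2 (coeff F i) (t * w$1) (t * w$2) * (1 + t * w$3) ^ i)"
    by (subst poly_sum_le[OF map_poly_degree_leq]) (simp add: coeff_map_poly)
  also have "\<dots> = (\<Sum>i\<le>degree F. ev2 (coeff F i) (w$1) (w$2) * (t^(n-i) * (1 + t * w$3) ^ i))"
    by (simp add: homog_coeff_ev2[OF assms(1)] mult_ac)
  also have "\<dots> = poly (\<Sum>i\<le>degree F. smult (ev2 (coeff F i) (w$1) (w$2)) (monom 1 (n - i) * [:1, w$3:]^i)) t"
    by (simp add: poly_sum poly_monom mult_ac)
  finally show "poly (restr_line F e3 w) t = \<dots>" .
qed

lemma restr_e3_low:
  assumes "homogeneous3 F n" "F \<noteq> 0" "k < n - degree F"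
  shows "coeff (restr_line F e3 w) k = 0"
proof -
  have "coeff (monom (1::complex) (n - i) * [:1, w$3:]^i) k = 0" if "i \<le> degree F" for i
    using that assms(3) by (simp add: coeff_monom_mult)
  then show ?thesis by (simp add: restr_e3_expand[OF assms(1,2)] coeff_sum)
qed

lemma restr_e3_lead:
  assumes "homogeneous3 F n" "F \<noteq> 0"
  shows "coeff (restr_line F e3 w) (n - degree F) = ev2 (lead_coeff F) (w$1) (w$2)"
proof -
  have d: "degree F \<le> n" by (rule homog_deg_le[OF assms])
  have "coeff (monom (1::complex) (n - i) * [:1, w$3:]^i) (n - degree F) = (if i = degree F then 1 else 0)"
    if "i \<le> degree F" for i
    using that d by (auto simp: coeff_monom_mult coeff_0_power)
  then have "coeff (restr_line F e3 w) (n - degree F) =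
      (\<Sum>i\<le>degree F. ev2 (coeff F i) (w$1) (w$2) * (if i = degree F then 1 else 0))"
    by (simp add: restr_e3_expand[OF assms(1,2)] coeff_sum)
  also have "\<dots> = ev2 (lead_coeff F) (w$1) (w$2)"
    by (simp add: sum.delta' if_distrib cong: if_cong)
  finally show ?thesis .
qed



lemma ev_vec_const: "ev [:g:] (vector [x, y, z]) = ev2 g x y"
  by (simp add: ev_const_C)

lemma ev_deg1:
  assumes "degree G \<le> 1"
  shows "ev G (vector [x, y, z]) = ev2 (coeff G 0) x y + z * ev2 (coeff G 1) x y"
proof -
  have "ev G (vector [x, y, z]) = poly (map_poly (\<lambda>C. ev2 C x y) G) z" by (simp add: ev_z)
  also have "\<dots> = (\<Sum>i\<le>1. coeff (map_poly (\<lambda>C. ev2 C x y) G) i * z ^ i)"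
    by (rule poly_sum_le) (use assms map_poly_degree_leq[of "\<lambda>C. ev2 C x y" G] in linarith)
  finally show ?thesis by (simp add: coeff_map_poly mult_ac)
qed

lemma case_deg0:
  fixes G H :: "complex poly poly poly"
  assumes dG: "degree G = 0" and nc: "\<And>c. G \<noteq> [:[:[:c:]:]:]" and dH: "degree H \<noteq> 0"
  and CZ: "\<And>x y z. x \<noteq> 0 \<or> y \<noteq> 0 \<Longrightarrow> ev G (vector [x, y, z]) = 0 \<Longrightarrow> ev H (vector [x, y, z]) = 0 \<Longrightarrow> False"
  and TC: "\<And>x y. x \<noteq> 0 \<or> y \<noteq> 0 \<Longrightarrow> ev2 (lead_coeff G) x y = 0 \<Longrightarrow> ev2 (lead_coeff H) x y = 0 \<Longrightarrow> False"
  shows False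
proof -
  obtain g where g: "G = [:g:]" using dG by (metis degree_eq_zeroE)
  have "g \<noteq> [:[:c:]:]" for c using nc g by blast
  then obtain x0 y0 where xy: "x0 \<noteq> 0 \<or> y0 \<noteq> 0" "ev2 g x0 y0 = 0" using zero_lemma by blast
  have Gz: "ev G (vector [x0, y0, z]) = 0" for z using xy by (simp add: g ev_vec_const)
  define h where "h = map_poly (\<lambda>C. ev2 C x0 y0) H"
  have Hz: "ev H (vector [x0, y0, z]) = poly h z" for z by (simp add: h_def ev_z)
  have nr: "poly h z \<noteq> 0" for z using CZ[OF xy(1) Gz] Hz by metis
  have "degree h = 0"
  proof (rule ccontr)
    assume "degree h \<noteq> 0"
    then have "\<not> constant (poly h)" by (simp add: constant_degree)
    then show False using fundamental_theorem_of_algebra nr by blast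
  qed
  then have "coeff h (degree H) = 0" using dH by (simp add: coeff_eq_0)
  then have "ev2 (lead_coeff H) x0 y0 = 0" by (simp add: h_def coeff_map_poly)
  moreover have "ev2 (lead_coeff G) x0 y0 = 0" using xy by (simp add: g)
  ultimately show False using TC xy(1) by blast
qed

lemma case_deg11:
  fixes G H :: "complex poly poly poly"
  assumes dG: "degree G = 1" and dH: "degree H = 1"
  and CZ: "\<And>x y z. x \<noteq> 0 \<or> y \<noteq> 0 \<Longrightarrow> ev G (vector [x, y, z]) = 0 \<Longrightarrow> ev H (vector [x, y, z]) = 0 \<Longrightarrow> False"
  and TC: "\<And>x y. x \<noteq> 0 \<or> y \<noteq> 0 \<Longrightarrow> ev2 (lead_coeff G) x y = 0 \<Longrightarrow> ev2 (lead_coeff H) x y = 0 \<Longrightarrow> False"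
  and Z00: "\<And>z. ev (G * H) (vector [0, 0, z]) = 0"
  shows False
proof -
  define g0 g1 h0 h1 where "g0 = coeff G 0" "g1 = coeff G 1" "h0 = coeff H 0" "h1 = coeff H 1"
  have evG: "ev G (vector [x, y, z]) = ev2 g0 x y + z * ev2 g1 x y" for x y z
    unfolding g0_g1_h0_h1_def by (rule ev_deg1) (simp add: dG)
  have evH: "ev H (vector [x, y, z]) = ev2 h0 x y + z * ev2 h1 x y" for x y z
    unfolding g0_g1_h0_h1_def by (rule ev_deg1) (simp add: dH)
  have lcG: "lead_coeff G = g1" and lcH: "lead_coeff H = h1" using dG dH g0_g1_h0_h1_def by simp_all
  have "G \<noteq> 0" using dG by auto
  then have g1nz: "g1 \<noteq> 0" using lcG leading_coeff_0_iff[of G] by metis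
  define R where "R = g1 * h0 - g0 * h1"
  have "\<exists>x0 y0. (x0 \<noteq> 0 \<or> y0 \<noteq> 0) \<and> ev2 R x0 y0 = 0"
  proof (cases "\<exists>c. R = [:[:c:]:]")
    case False
    then show ?thesis using zero_lemma by blast
  next
    case True
    then obtain c where c: "R = [:[:c:]:]" by blast
    define GZ where "GZ = map_poly (\<lambda>C. ev2 C 0 0) G"
    define HZ where "HZ = map_poly (\<lambda>C. ev2 C 0 0) H"
    have "poly (GZ * HZ) z = 0" for z
    proof -
      have "ev G (vector [0, 0, z]) * ev H (vector [0, 0, z]) = 0" using Z00[of z] by simp
      then show ?thesis by (simp add: GZ_def HZ_def ev_z)
    qed
    then have "GZ * HZ = 0" by (intro id1) 
    then have "GZ = 0 \<or> HZ = 0" by simp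
    then have "ev2 R 0 0 = 0"
    proof
      assume "GZ = 0"
      have "ev2 (coeff G i) 0 0 = 0" for i
        using \<open>GZ = 0\<close> coeff_map_poly[of "\<lambda>C. ev2 C 0 0" G i] unfolding GZ_def by simp
      then have "ev2 g0 0 0 = 0" "ev2 g1 0 0 = 0" by (simp_all add: g0_g1_h0_h1_def)
      then show ?thesis by (simp add: R_def)
    next
      assume "HZ = 0"
      have "ev2 (coeff H i) 0 0 = 0" for i
        using \<open>HZ = 0\<close> coeff_map_poly[of "\<lambda>C. ev2 C 0 0" H i] unfolding HZ_def by simp
      then have "ev2 h0 0 0 = 0" "ev2 h1 0 0 = 0" by (simp_all add: g0_g1_h0_h1_def)
      then show ?thesis by (simp add: R_def)
    qed
    then have R0: "ev2 R x y = 0" for x y using c by simp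
    obtain x0 y0 where "x0 \<noteq> 0" "ev2 g1 x0 y0 \<noteq> 0" using nz_lemma[OF g1nz] by blast
    then show ?thesis using R0 by blast
  qed
  then obtain x0 y0 where xy: "x0 \<noteq> 0 \<or> y0 \<noteq> 0" and R0: "ev2 R x0 y0 = 0" by blast
  define a0 a1 b0 b1 where "a0 = ev2 g0 x0 y0" "a1 = ev2 g1 x0 y0" "b0 = ev2 h0 x0 y0" "b1 = ev2 h1 x0 y0"
  have R0': "a1 * b0 - a0 * b1 = 0" using R0 by (simp add: R_def a0_a1_b0_b1_def)
  show False
  proof (cases "a1 = 0")
    case False
    define z0 where "z0 = - a0 / a1"
    have "ev G (vector [x0, y0, z0]) = 0" using False by (simp add: evG z0_def a0_a1_b0_b1_def[symmetric] field_simps)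
    moreover have "ev H (vector [x0, y0, z0]) = 0"
    proof -
      have "ev H (vector [x0, y0, z0]) = b0 + z0 * b1" by (simp add: evH a0_a1_b0_b1_def)
      also have "\<dots> = (a1 * b0 - a0 * b1) / a1" using False by (simp add: z0_def field_simps)
      finally show ?thesis using R0' by simp
    qed
    ultimately show False using CZ xy by blast
  next
    case a1: True
    show False
    proof (cases "b1 = 0")
      case True
      then show False using TC[OF xy] a1 lcG lcH by (simp add: a0_a1_b0_b1_def)
    next
      case False
      have a0: "a0 = 0" using R0' a1 False by simp
      define z0 where "z0 = - b0 / b1"
      have "ev G (vector [x0, y0, z0]) = 0" using a0 a1 by (simp add: evG a0_a1_b0_b1_def[symmetric])
      moreover have "ev H (vector [x0, y0, z0]) = 0" using False
        by (simp add: evH z0_def a0_a1_b0_b1_def[symmetric] field_simps)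
      ultimately show False using CZ xy by blast
    qed
  qed
qed



lemma ev_z0: "ev F (vector [x, y, 0]) = ev2 (coeff F 0) x y"
  by (simp add: ev_z poly_0_coeff_0 coeff_map_poly)

lemma single_monom: assumes "\<And>k. coeff c k \<noteq> 0 \<Longrightarrow> k = m" shows "c = monom (coeff c m) m"
  by (intro poly_eqI) (use assms in \<open>auto simp: coeff_monom\<close>)

lemma restr_coeff0: "coeff (restr_line G w v) 0 = ev G w"
  by (simp add: poly_0_coeff_0[symmetric] restr_ev)

lemma prod01: fixes a b :: "'a::comm_ring_1 poly"
  assumes "coeff a 0 = 0" "coeff b 0 = 0" shows "coeff (a * b) 0 = 0" "coeff (a * b) 1 = 0"
  using assms by (simp_all add: coeff_mult)

lemma mv_lin: "A *v (a *s x + b *s y) = a *s (A *v x) + b *s (A *v (y :: complex^3))"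
  by (simp add: vec_eq_iff matrix_vector_mult_def sum.distrib sum_distrib_left algebra_simps)

lemma homog_compF:
  assumes "homogeneous3 F n" shows "homogeneous3 (compF F A) n"
  by (rule homog_sem_conv) (simp add: ev_compF mv_smult homog_sem[OF assms])

lemma low_mult:
  assumes "point_multiplicity F p = m" "k < m"
  shows "coeff (restr_line F p v) k = 0"
proof -
  have "k < (LEAST m. \<exists>v. coeff (restr_line F p v) m \<noteq> 0)" using assms by (simp add: point_multiplicity_def)
  then have "\<not> (\<exists>v. coeff (restr_line F p v) k \<noteq> 0)" by (rule not_less_Least)
  then show ?thesis by blast
qed

lemma part2:
  fixes F :: "complex poly poly poly" and n :: nat
  assumes F0: "F \<noteq> 0" and hom: "homogeneous3 F n" and n1: "n \<ge> 1"
  and sp: "singular_point F p" and sq: "singular_point F q" and npq: "\<not> proj_eq p q"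
  and op: "ordinary_singular_point F p (n - 1)"
  shows "has_linear_component F"
proof -
  have p0: "p \<noteq> 0" and q0: "q \<noteq> 0" using sp sq by (auto simp: singular_point_def)
  have ind: "\<not> (\<exists>k. q = k *s p)"
  proof
    assume "\<exists>k. q = k *s p"
    then obtain k where k: "q = k *s p" by blast
    with q0 have "k \<noteq> 0" by auto
    with k npq show False by (auto simp: proj_eq_def)
  qed
  obtain c where "det (mk3 p q c) \<noteq> 0" using basis12[OF p0 ind] by blast
  define A where "A = mk3 p q c"
  obtain B where AB: "\<And>w. A *v (B *v w) = w" "\<And>w. B *v (A *v w) = w"
    using inverse_ex[OF \<open>det (mk3 p q c) \<noteq> 0\<close>] unfolding A_def[symmetric] by blast
  define F' where "F' = compF F A"
  have hom': "homogeneous3 F' n" unfolding F'_def by (rule homog_compF[OF hom])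
  have Ae1: "A *v vector [1, 0, 0] = p" and Ae2: "A *v vector [0, 1, 0] = q"
    by (simp_all add: A_def mk3_mult)
  have pm: "point_multiplicity F p = n - 1" using op by (simp add: ordinary_singular_point_def)
  define C0 where "C0 = coeff F' 0"
  have hC: "j + k = n" if "coeff (coeff C0 j) k \<noteq> 0" for j k
  proof -
    have "0 + j + k = n" using hom' that unfolding homogeneous3_def C0_def by blast
    then show ?thesis by simp
  qed
  have P1: "restr_line F' (vector [1, 0, 0]) (vector [0, 1, 0]) = map_poly (\<lambda>c. poly c 1) C0"
  proof (rule id1_eq)
    fix t :: complex
    have "vector [1, 0, 0] + t *s vector [0, 1, 0] = (vector [1, t, 0] :: complex^3)"
      by (simp add: vec_eq_iff forall_3)
    then show "poly (restr_line F' (vector [1, 0, 0]) (vector [0, 1, 0])) t = poly (map_poly (\<lambda>c. poly c 1) C0) t"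
      by (simp add: restr_ev ev_z0 C0_def ev2_as_poly)
  qed
  have P1': "restr_line F' (vector [1, 0, 0]) (vector [0, 1, 0]) = restr_line F p q"
    unfolding F'_def restr_compF Ae1 Ae2 ..
  have cj: "coeff C0 j = monom (coeff (coeff C0 j) (n - j)) (n - j)" for j
    by (rule single_monom) (use hC in force)
  have low: "coeff C0 j = 0" if "j < n - 1" for j
  proof -
    have "coeff (restr_line F p q) j = 0" using low_mult[OF pm that] .
    then have "poly (coeff C0 j) 1 = 0" using P1 P1' by (simp add: coeff_map_poly)
    then have "coeff (coeff C0 j) (n - j) = 0" by (subst (asm) cj) (simp add: poly_monom)
    then show ?thesis using cj[of j] by simp
  qed
  have high: "coeff C0 j = 0" if "j > n" for j
    by (intro poly_eqI) (use hC that in force)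
  define a b where "a = coeff (coeff C0 (n - 1)) 1" "b = coeff (coeff C0 n) 0"
  have C0form: "C0 = monom (monom a 1) (n - 1) + monom (monom b 0) n"
  proof (rule poly_eqI)
    fix j
    consider "j < n - 1" | "j = n - 1" | "j = n" | "j > n" using n1 by linarith
    then show "coeff C0 j = coeff (monom (monom a 1) (n - 1) + monom (monom b 0) n) j"
    proof cases
      case 1 then show ?thesis using low[OF 1] by simp
    next
      case 2 then show ?thesis using cj[of j] n1 by (simp add: a_b_def)
    next
      case 3 then show ?thesis using cj[of j] n1 by (simp add: a_b_def)
    next
      case 4 then show ?thesis using high[OF 4] by simp
    qed
  qed
  have P2: "restr_line F' (vector [0, 1, 0]) (vector [1, 0, 0]) = monom a 1 + monom b 0"
  proof (rule id1_eq)
    fix t :: complex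
    have "vector [0, 1, 0] + t *s vector [1, 0, 0] = (vector [t, 1, 0] :: complex^3)"
      by (simp add: vec_eq_iff forall_3)
    then have "poly (restr_line F' (vector [0, 1, 0]) (vector [1, 0, 0])) t = poly (poly C0 [:1:]) t"
      by (simp add: restr_ev ev_z0 C0_def ev2_def)
    also have "poly C0 [:1:] = monom a 1 + monom b 0"
      by (simp add: C0form poly_monom pCons_one)
    finally show "poly (restr_line F' (vector [0, 1, 0]) (vector [1, 0, 0])) t = poly (monom a 1 + monom b 0) t" .
  qed
  have P2': "restr_line F' (vector [0, 1, 0]) (vector [1, 0, 0]) = restr_line F q p"
    unfolding F'_def restr_compF Ae1 Ae2 ..
  have "coeff (restr_line F q p) 0 = 0" "coeff (restr_line F q p) 1 = 0"
    using sq by (auto simp: singular_point_def)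
  then have ab: "a = 0" "b = 0" using P2 P2' by simp_all
  then have "C0 = 0" using C0form by simp
  obtain a0 K where FK: "F' = pCons a0 K" by (cases F')
  have "a0 = 0" using FK \<open>C0 = 0\<close> C0_def by simp
  then have evF': "ev F' w = w$3 * ev K w" for w using FK by (simp add: ev_def eval3_def)
  define L where "L = lin3 B 3"
  define K2 where "K2 = compF K B"
  have FLK: "F = L * K2"
  proof (rule id3_eq)
    fix w
    have "ev F w = ev F (A *v (B *v w))" by (simp add: AB)
    also have "\<dots> = ev F' (B *v w)" by (simp add: F'_def ev_compF)
    also have "\<dots> = ev (L * K2) w" by (simp add: evF' L_def K2_def ev_lin3 ev_compF)
    finally show "ev F w = ev (L * K2) w" .
  qed
  have "L \<noteq> 0"
  proof
    assume "L = 0"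
    then have "ev L (A *v vector [0, 0, 1]) = 0" by simp
    then show False by (simp add: L_def ev_lin3 AB)
  qed
  moreover have "homogeneous3 L 1"
    by (rule homog_sem_conv) (simp add: L_def ev_lin3 mv_smult)
  moreover have "L dvd F" using FLK by simp
  ultimately show ?thesis unfolding has_linear_component_def by blast
qed



lemma dehom:
  fixes C :: "complex poly poly"
  assumes "\<And>j k. coeff (coeff C j) k \<noteq> 0 \<Longrightarrow> j + k = m"
  shows "coeff (poly C [:yy:]) k = (if k \<le> m then yy^(m-k) * coeff (coeff C (m-k)) k else 0)"
proof -
  define N where "N = degree C + m"
  have "poly C [:yy:] = (\<Sum>j\<le>N. coeff C j * [:yy:] ^ j)" by (rule poly_sum_le) (simp add: N_def)
  then have "coeff (poly C [:yy:]) k = (\<Sum>j\<le>N. yy ^ j * coeff (coeff C j) k)"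
    by (simp add: coeff_sum poly_const_pow mult.commute)
  also have "\<dots> = (\<Sum>j\<le>N. if j = m - k \<and> k \<le> m then yy ^ j * coeff (coeff C j) k else 0)"
  proof (rule sum.cong)
    fix j assume "j \<in> {..N}"
    show "yy ^ j * coeff (coeff C j) k = (if j = m - k \<and> k \<le> m then yy ^ j * coeff (coeff C j) k else 0)"
      using assms[of j k] by auto
  qed simp
  also have "\<dots> = (if k \<le> m then yy^(m-k) * coeff (coeff C (m-k)) k else 0)"
  proof (cases "k \<le> m")
    case True
    have "m - k \<le> N" by (simp add: N_def)
    then show ?thesis using True by (simp add: sum.delta' cong: conj_cong)
  qed simp
  finally show ?thesis .
qed

lemma span_eq:
  fixes p v :: "complex^3"
  assumes "\<alpha> \<noteq> 0"
  shows "{w. \<exists>a b. w = a *s p + b *s v} = {w. \<exists>a b. w = a *s p + b *s (\<alpha> *s v + \<beta> *s p)}"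
proof (intro set_eqI iffI; elim CollectE exE; intro CollectI)
  fix w a b assume "w = a *s p + b *s v"
  then show "\<exists>a b. w = a *s p + b *s (\<alpha> *s v + \<beta> *s p)" using assms
    by (intro exI[of _ "a - b * \<beta> / \<alpha>"] exI[of _ "b / \<alpha>"]) (simp add: vec_eq_iff field_simps)
next
  fix w a b assume "w = a *s p + b *s (\<alpha> *s v + \<beta> *s p)"
  then show "\<exists>a b. w = a *s p + b *s v"
    by (intro exI[of _ "a + b * \<beta>"] exI[of _ "b * \<alpha>"]) (simp add: vec_eq_iff field_simps)
qed

lemma const_unit: fixes c :: complex assumes "c \<noteq> 0" shows "[:[:[:c:]:]:] dvd 1"
proof -
  have "[:[:[:c:]:]:] * [:[:[:inverse c:]:]:] = 1" by (rule id3_eq) (simp add: assms)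
  then show ?thesis by (metis dvdI)
qed

lemma part1_core:
  fixes F G H :: "complex poly poly poly" and n :: nat
  assumes F0: "F \<noteq> 0" and hom: "homogeneous3 F n" and n1: "n \<ge> 1"
  and sp: "singular_point F p" and only: "\<forall>q. singular_point F q \<longrightarrow> proj_eq p q"
  and op: "ordinary_singular_point F p \<mu>" and mu: "\<mu> = n - 1 \<or> \<mu> = n - 2"
  and FGH: "F = G * H" and nG: "\<not> G dvd 1" and nH: "\<not> H dvd 1"
  shows False
proof -
  have pm: "point_multiplicity F p = \<mu>" and fin: "finite (tangent_lines F p)"
    and cardT: "card (tangent_lines F p) = \<mu>" using op by (auto simp: ordinary_singular_point_def)
  have p0: "p \<noteq> 0" using sp by (simp add: singular_point_def)
  have sing0: "coeff (restr_line F p v) 0 = 0" for v using sp by (simp add: singular_point_def)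
  have evp: "ev F p = 0" using sing0[of 0] by (simp add: restr_coeff0)
  obtain w0 where w0: "ev F w0 \<noteq> 0" using F0 id3 by blast
  have "poly (restr_line F p (w0 - p)) 1 \<noteq> 0" using w0 by (simp add: restr_ev)
  then have "restr_line F p (w0 - p) \<noteq> 0" by auto
  then obtain m0 where "coeff (restr_line F p (w0 - p)) m0 \<noteq> 0" by (metis poly_eqI coeff_0)
  then have "\<exists>m v. coeff (restr_line F p v) m \<noteq> 0" by blast
  then have "\<exists>v. coeff (restr_line F p v) (LEAST m. \<exists>v. coeff (restr_line F p v) m \<noteq> 0) \<noteq> 0"
    by (rule LeastI_ex)
  then obtain u where u: "coeff (restr_line F p u) \<mu> \<noteq> 0"
    using pm by (auto simp: point_multiplicity_def)
  have mu0: "\<mu> \<noteq> 0"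
  proof
    assume "\<mu> = 0"
    then show False using u sing0[of u] by simp
  qed
  have par0: "restr_line F p (k *s p) = 0" for k
  proof (rule id1)
    fix t
    have "ev F (p + t *s (k *s p)) = ev F ((1 + t * k) *s p)"
      by (rule arg_cong[where f="ev F"]) (simp add: vec_eq_iff algebra_simps)
    also have "\<dots> = (1 + t * k) ^ n * ev F p" by (rule homog_sem[OF hom])
    also have "\<dots> = 0" by (simp add: evp)
    finally show "poly (restr_line F p (k *s p)) t = 0"
      by (simp only: restr_ev)
  qed
  have nparu: "\<not> (\<exists>k. p = k *s u)"
  proof
    assume "\<exists>k. p = k *s u"
    then obtain k where k: "p = k *s u" by blast
    with p0 have "k \<noteq> 0" by auto
    then have "u = (1 / k) *s p" using k by (simp add: vec_eq_iff)
    then show False using u par0[of "1 / k"] by simp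
  qed
  have u0: "u \<noteq> 0" using u par0[of 0] by auto
  obtain c where "det (mk3 u c p) \<noteq> 0" using basis13[OF u0 nparu] by blast
  define A where "A = mk3 u c p"
  obtain B where AB: "\<And>w. A *v (B *v w) = w" "\<And>w. B *v (A *v w) = w"
    using inverse_ex[OF \<open>det (mk3 u c p) \<noteq> 0\<close>] unfolding A_def[symmetric] by blast
  define e1 :: "complex^3" where "e1 = vector [1, 0, 0]"
  have Ae1: "A *v e1 = u" and Ae3: "A *v e3 = p" by (simp_all add: A_def mk3_mult e1_def e3_def)
  define F' G' H' where "F' = compF F A" "G' = compF G A" "H' = compF H A"
  have FGH': "F' = G' * H'" by (simp add: F'_G'_H'_def FGH compF_mult)
  have hom': "homogeneous3 F' n" unfolding F'_G'_H'_def by (rule homog_compF[OF hom])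
  have F'0: "F' \<noteq> 0"
  proof
    assume "F' = 0"
    then have "ev F w = 0" for w using ev_compF[of F A "B *v w"] by (simp add: F'_G'_H'_def AB)
    then show False using F0 id3 by blast
  qed
  have G'0: "G' \<noteq> 0" and H'0: "H' \<noteq> 0" using F'0 FGH' by auto
  have restrF': "restr_line F' w v = restr_line F (A *v w) (A *v v)" for w v
    by (simp add: F'_G'_H'_def restr_compF)
  define d where "d = degree F'"
  define lcF where "lcF = lead_coeff F'"
  have lcF0: "lcF \<noteq> 0" using F'0 by (simp add: lcF_def)
  have dle: "d \<le> n" using homog_deg_le[OF hom' F'0] by (simp add: d_def)
  have cu: "coeff (restr_line F' e3 e1) \<mu> \<noteq> 0" using u by (simp add: restrF' Ae1 Ae3)
  have mueq: "\<mu> = n - d"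
  proof (rule antisym)
    show "\<mu> \<le> n - d"
    proof (rule ccontr)
      assume "\<not> \<mu> \<le> n - d"
      then have "n - d < \<mu>" by simp
      obtain x y where "ev2 lcF x y \<noteq> 0" using nz_lemma[OF lcF0] by blast
      then have "coeff (restr_line F' e3 (vector [x, y, 0])) (n - d) \<noteq> 0"
        using restr_e3_lead[OF hom' F'0] by (simp add: d_def lcF_def)
      then show False using low_mult[OF pm \<open>n - d < \<mu>\<close>] by (simp add: restrF' Ae3)
    qed
  next
    show "n - d \<le> \<mu>"
    proof (rule ccontr)
      assume "\<not> n - d \<le> \<mu>"
      then show False using restr_e3_low[OF hom' F'0, of \<mu> e1] cu by (simp add: d_def)
    qed
  qed
  have lc10: "ev2 lcF 1 0 \<noteq> 0"
    using cu restr_e3_lead[OF hom' F'0, of e1] by (simp add: mueq d_def lcF_def e1_def)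
  have lchom: "j + k = \<mu>" if "coeff (coeff lcF j) k \<noteq> 0" for j k
  proof -
    have "d + j + k = n" using hom' that unfolding homogeneous3_def lcF_def d_def by blast
    then show ?thesis using mueq by simp
  qed
  have lcscale: "ev2 lcF (t * x) (t * y) = t ^ \<mu> * ev2 lcF x y" for t x y
    by (rule ev2_homog) (rule lchom)
  have lcprod: "lcF = lead_coeff G' * lead_coeff H'" by (simp add: lcF_def FGH' lead_coeff_mult)
  have dsum: "degree G' + degree H' = d" using G'0 H'0 by (simp add: d_def FGH' degree_mult_eq)
  have d12: "1 \<le> d" "d \<le> 2" using mu mueq mu0 dle n1 by auto
  \<comment> \<open>common zeros give extra singular points\<close>
  have CZ: False if xy: "x \<noteq> 0 \<or> y \<noteq> 0" and gz: "ev G' (vector [x, y, z]) = 0"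
    and hz: "ev H' (vector [x, y, z]) = 0" for x y z
  proof -
    define w :: "complex^3" where "w = vector [x, y, z]"
    have "singular_point F (A *v w)"
      unfolding singular_point_def
    proof (intro conjI allI)
      show "A *v w \<noteq> 0"
      proof
        assume "A *v w = 0"
        then have "w = 0" using AB(2)[of w] by simp
        then show False using xy by (simp add: w_def vec_eq_iff forall_3)
      qed
    next
      fix v
      have e: "restr_line F (A *v w) v = restr_line G' w (B *v v) * restr_line H' w (B *v v)"
        using restrF'[of w "B *v v"] by (simp add: AB FGH' restr_mult)
      have "coeff (restr_line G' w (B *v v)) 0 = 0" "coeff (restr_line H' w (B *v v)) 0 = 0"
        using gz hz by (simp_all add: restr_coeff0 w_def)
      from prod01[OF this] show "coeff (restr_line F (A *v w) v) 0 = 0" "coeff (restr_line F (A *v w) v) 1 = 0"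
        by (simp_all add: e)
    qed
    then have "proj_eq p (A *v w)" using only by blast
    then obtain k where "A *v w = k *s p" by (auto simp: proj_eq_def)
    then have "A *v w = A *v (k *s e3)" by (simp add: mv_smult Ae3)
    then have "w = k *s e3" using AB(2) by metis
    then show False using xy by (simp add: w_def e3_def vec_eq_iff forall_3)
  qed
  \<comment> \<open>common tangents contradict ordinarity\<close>
  have TC: False if xy: "x0 \<noteq> 0 \<or> y0 \<noteq> 0" and gz: "ev2 (lead_coeff G') x0 y0 = 0"
    and hz: "ev2 (lead_coeff H') x0 y0 = 0" for x0 y0
  proof -
    have lz: "ev2 lcF x0 y0 = 0" using gz by (simp add: lcprod)
    have y0: "y0 \<noteq> 0"
    proof
      assume "y0 = 0"
      then have "x0 \<noteq> 0" using xy by simp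
      have "ev2 lcF (x0 * 1) (x0 * 0) = x0 ^ \<mu> * ev2 lcF 1 0" by (rule lcscale)
      then show False using lz lc10 \<open>x0 \<noteq> 0\<close> \<open>y0 = 0\<close> by simp
    qed
    define s where "s = poly lcF [:y0:]"
    have cs: "coeff s k = (if k \<le> \<mu> then y0^(\<mu>-k) * coeff (coeff lcF (\<mu>-k)) k else 0)" for k
      unfolding s_def by (rule dehom) (rule lchom)
    have s0c: "coeff (poly lcF 0) k = (if k \<le> \<mu> then 0^(\<mu>-k) * coeff (coeff lcF (\<mu>-k)) k else 0)" for k
      using dehom[where C=lcF and m="\<mu>" and yy=0 and k=k] lchom by simp
    have "poly lcF 0 = monom (coeff (poly lcF 0) \<mu>) \<mu>"
      by (rule single_monom) (auto simp: s0c split: if_splits)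
    then have "ev2 lcF 1 0 = coeff (poly lcF 0) \<mu>"
      unfolding ev2_def by (metis poly_monom power_one mult_1_right pCons_0_0)
    then have "coeff (coeff lcF 0) \<mu> \<noteq> 0" using lc10 s0c[of \<mu>] by simp
    then have "coeff s \<mu> \<noteq> 0" using cs[of \<mu>] by simp
    then have s0: "s \<noteq> 0" by auto
    have sdeg: "degree s \<le> \<mu>" by (rule degree_le) (simp add: cs)
    have sprod: "s = poly (lead_coeff G') [:y0:] * poly (lead_coeff H') [:y0:]"
      by (simp add: s_def lcprod)
    have "card {x. poly s x = 0} \<le> \<mu> - 1"
      by (rule roots_double[OF sprod s0 sdeg]) (use gz hz in \<open>simp_all add: ev2_def\<close>)
    moreover have "tangent_lines F p \<subseteq> (\<lambda>r. {w. \<exists>a b. w = a *s p + b *s (A *v vector [r, y0, 0])}) ` {x. poly s x = 0}"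
    proof
      fix T assume "T \<in> tangent_lines F p"
      then obtain v where T: "T = {w. \<exists>a b. w = a *s p + b *s v}" and nv: "\<forall>c. v \<noteq> c *s p"
        and cz: "coeff (restr_line F p v) \<mu> = 0"
        unfolding tangent_lines_def pm by blast
      define w where "w = B *v v"
      have vw: "v = A *v w" by (simp add: w_def AB)
      have "coeff (restr_line F' e3 w) (n - d) = 0" using cz by (simp add: restrF' Ae3 vw[symmetric] mueq)
      then have wz: "ev2 lcF (w$1) (w$2) = 0" using restr_e3_lead[OF hom' F'0, of w] by (simp add: d_def lcF_def)
      have w12: "w$1 \<noteq> 0 \<or> w$2 \<noteq> 0"
      proof (rule ccontr)
        assume "\<not> ?thesis"
        then have "w = (w$3) *s e3" by (simp add: vec_eq_iff forall_3 e3_def)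
        then have "A *v w = (w$3) *s (A *v e3)" by (metis mv_smult)
        then have "v = (w$3) *s p" using vw Ae3 by simp
        then show False using nv by blast
      qed
      have w2: "w$2 \<noteq> 0"
      proof
        assume "w$2 = 0"
        then have "w$1 \<noteq> 0" using w12 by simp
        have "ev2 lcF (w$1 * 1) (w$1 * 0) = (w$1) ^ \<mu> * ev2 lcF 1 0" by (rule lcscale)
        then show False using wz lc10 \<open>w$1 \<noteq> 0\<close> \<open>w$2 = 0\<close> by simp
      qed
      define \<alpha> where "\<alpha> = y0 / w$2"
      have \<alpha>0: "\<alpha> \<noteq> 0" using y0 w2 by (simp add: \<alpha>_def)
      define r where "r = \<alpha> * w$1"
      have "ev2 lcF r y0 = ev2 lcF (\<alpha> * w$1) (\<alpha> * w$2)" using w2 by (simp add: r_def \<alpha>_def)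
      also have "\<dots> = 0" by (simp add: lcscale wz)
      finally have rr: "poly s r = 0" by (simp add: s_def ev2_def)
      have eqv: "vector [r, y0, 0] = \<alpha> *s w + (- (\<alpha> * w$3)) *s e3"
        using w2 by (simp add: vec_eq_iff forall_3 e3_def r_def \<alpha>_def)
      have "A *v vector [r, y0, 0] = A *v (\<alpha> *s w + (- (\<alpha> * w$3)) *s e3)" using eqv by (rule arg_cong)
      also have "\<dots> = \<alpha> *s (A *v w) + (- (\<alpha> * w$3)) *s (A *v e3)" by (rule mv_lin)
      also have "\<dots> = \<alpha> *s v + (- (\<alpha> * w$3)) *s p" by (simp only: vw Ae3)
      finally have Aeq: "A *v vector [r, y0, 0] = \<alpha> *s v + (- (\<alpha> * w$3)) *s p" .
      have "T = {w. \<exists>a b. w = a *s p + b *s (A *v vector [r, y0, 0])}"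
        unfolding T Aeq by (rule span_eq[OF \<alpha>0])
      then show "T \<in> (\<lambda>r. {w. \<exists>a b. w = a *s p + b *s (A *v vector [r, y0, 0])}) ` {x. poly s x = 0}"
        using rr by blast
    qed
    then have "card (tangent_lines F p) \<le> card {x. poly s x = 0}"
      using poly_roots_finite[OF s0] by (meson card_image_le card_mono finite_imageI le_trans)
    ultimately show False using cardT mu0 by linarith
  qed
  have nc: "X' \<noteq> [:[:[:a:]:]:]" if "X' = compF X A" "\<not> X dvd 1" "X \<noteq> 0" for X X' a
  proof
    assume X': "X' = [:[:[:a:]:]:]"
    have "X = [:[:[:a:]:]:]"
    proof (rule id3_eq)
      fix w
      have "ev X w = ev X (A *v (B *v w))" by (simp add: AB)
      also have "\<dots> = ev X' (B *v w)" using that(1) by (simp add: ev_compF)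
      also have "\<dots> = a" using X' by simp
      finally show "ev X w = ev [:[:[:a:]:]:] w" by simp
    qed
    with that(2,3) show False using const_unit by fastforce
  qed
  have G0: "G \<noteq> 0" and H0: "H \<noteq> 0" using F0 FGH by auto
  have ncG: "\<And>a. G' \<noteq> [:[:[:a:]:]:]" using nc[of G' G] nG G0 by (simp add: F'_G'_H'_def)
  have ncH: "\<And>a. H' \<noteq> [:[:[:a:]:]:]" using nc[of H' H] nH H0 by (simp add: F'_G'_H'_def)
  have Z00: "ev (G' * H') (vector [0, 0, z]) = 0" for z
  proof -
    have Az: "A *v vector [0, 0, z] = z *s p" by (simp add: A_def mk3_mult)
    have "ev (G' * H') (vector [0, 0, z]) = ev F' (vector [0, 0, z])" by (simp only: FGH')
    also have "\<dots> = ev F (z *s p)" by (simp only: F'_G'_H'_def ev_compF Az)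
    also have "\<dots> = z ^ n * ev F p" by (rule homog_sem[OF hom])
    finally show ?thesis by (simp add: evp)
  qed
  show False
  proof (cases "degree G' = 0")
    case True
    then have "degree H' \<noteq> 0" using dsum d12 by simp
    show False by (rule case_deg0[OF True ncG \<open>degree H' \<noteq> 0\<close>]) (use CZ TC in blast)+
  next
    case False
    show False
    proof (cases "degree H' = 0")
      case True
      show False by (rule case_deg0[OF True ncH False]) (use CZ TC in blast)+
    next
      case False2: False
      have "degree G' = 1" "degree H' = 1" using False False2 dsum d12 by auto
      then show False by (rule case_deg11) (use CZ TC Z00 in blast)+
    qed
  qed
qed


theorem proposition3p8:
  fixes F :: "complex poly poly poly" and n :: nat
  assumes "F \<noteq> 0" and "homogeneous3 F n" and "n \<ge> 1"
  shows "(\<forall>p \<mu>. singular_point F p \<and> (\<forall>q. singular_point F q \<longrightarrow> proj_eq p q)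
            \<and> ordinary_singular_point F p \<mu> \<and> (\<mu> = n - 1 \<or> \<mu> = n - 2)
            \<longrightarrow> irreducible F)
       \<and> (\<forall>p q. singular_point F p \<and> singular_point F q \<and> \<not> proj_eq p q
            \<and> (\<forall>r. singular_point F r \<longrightarrow> proj_eq p r \<or> proj_eq q r)
            \<and> ordinary_singular_point F p (n - 1) \<and> ordinary_singular_point F q 2
            \<longrightarrow> has_linear_component F)"
proof (intro conjI allI impI)
  fix p \<mu>
  assume h: "singular_point F p \<and> (\<forall>q. singular_point F q \<longrightarrow> proj_eq p q)
            \<and> ordinary_singular_point F p \<mu> \<and> (\<mu> = n - 1 \<or> \<mu> = n - 2)"
  show "irreducible F" unfolding irreducible_def
  proof (intro conjI allI impI)
    show "F \<noteq> 0" by fact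
    show "\<not> F dvd 1"
    proof
      assume "F dvd 1"
      then obtain G where G: "1 = F * G" by (erule dvdE)
      have "ev F (0 *s 0) = 0 ^ n * ev F 0" by (rule homog_sem[OF assms(2)])
      moreover have "(0::complex) ^ n = 0" using assms(3) by (simp add: zero_power)
      ultimately have "ev F 0 = 0" by simp
      then have "ev (1::complex poly poly poly) 0 = 0" using G by (metis ev_simps(2) mult_zero_left)
      then show False by simp
    qed
  next
    fix a b assume "F = a * b"
    then show "a dvd 1 \<or> b dvd 1" using part1_core[OF assms, of p \<mu> a b] h by blast
  qed
next
  fix p q
  assume h: "singular_point F p \<and> singular_point F q \<and> \<not> proj_eq p q
            \<and> (\<forall>r. singular_point F r \<longrightarrow> proj_eq p r \<or> proj_eq q r)
            \<and> ordinary_singular_point F p (n - 1) \<and> ordinary_singular_point F q 2"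
  then show "has_linear_component F" using part2[OF assms] by blast
qed

end
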